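(* Let $K\subseteq\mathbb{R}^d$ be nonempty, closed and convex with $B(0,1)\subseteq K\subseteq B(0,R)$ for some $R>1$, and let $\pi$ be the uniform distribution on $K$. Run the ASF for the uniform distribution on $K$ with step size $\eta=1/d^2$ from an initial distribution $\mu_0$ that is $M$-warm with respect to $\pi$, implementing step (2) by the projection-based rejection sampler. Let $y=y_k$ be the point produced by step (1) at any iteration $k$. Then the expected number of trials of the rejection sampler, $\mathbb{E}[n_{y}]$ with $n_y$ as below and expectation over the law of $y_k$, is at most $M(\sqrt{2\pi e}+1)$.
   Context: ASF with step size $\eta$: given $x_k$, (1) sample $y_k\sim\mathcal{N}(x_k,\eta I_d)$; (2) sample $x_{k+1}$ from the density proportional to $\exp(-\|x-y_k\|^2/(2\eta))\mathbf{1}_K(x)$. $\mu_0$ is $M$-warm w.r.t. $\pi$ if $\mu_0\ll\pi$ and $d\mu_0/d\pi\le M$. Projection-based rejection sampler for given $y$: repeat {draw $X\sim\mathcal{N}(\operatorname{proj}_K(y),\eta I_d)$ and independent $U\sim\mathcal{U}[0,1]$; accept $X$ if $U\le\exp(-\frac1\eta\langle X-\operatorname{proj}_K(y),\operatorname{proj}_K(y)-y\rangle)\mathbf{1}_K(X)$}. Its expected number of trials is $n_y=\frac{\int_{\mathbb{R}^d}\exp(-\mathcal{P}_1(x))dx}{\int_K\exp(-\frac{1}{2\eta}\|x-y\|^2)dx}$ where $\mathcal{P}_1(x)=\frac{1}{2\eta}\|x-\operatorname{proj}_K(y)\|^2+\frac{1}{2\eta}\|\operatorname{proj}_K(y)-y\|^2$;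 $\operatorname{proj}_K$ is the Euclidean projection onto $K$. *)

theory Defs
  imports "HOL-Probability.Probability"
begin

definition gauss_dens :: "real \<Rightarrow> 'a::euclidean_space \<Rightarrow> real" where
  "gauss_dens \<eta> z = (2 * pi * \<eta>) powr (- real DIM('a) / 2) * exp (- ((norm z)^2) / (2 * \<eta>))"

text \<open>Step (1) of ASF: law of y = x + N(0, eta I) when x has law mu.\<close>
definition asf_forward :: "real \<Rightarrow> 'a::euclidean_space measure \<Rightarrow> 'a measure" where
  "asf_forward \<eta> \<mu> = density lborel (\<lambda>y. \<integral>\<^sup>+ x. ennreal (gauss_dens \<eta> (y - x)) \<partial>\<mu>)"

definition asf_Z :: "real \<Rightarrow> 'a::euclidean_space set \<Rightarrow> 'a \<Rightarrow> ennreal" where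
  "asf_Z \<eta> K y = (\<integral>\<^sup>+ x. ennreal (exp (- ((norm (x - y))^2) / (2 * \<eta>)) * indicator K x) \<partial>lborel)"

text \<open>Step (2) of ASF: law of x' whose conditional density given y is
  proportional to exp(-|x-y|^2/(2 eta)) 1_K(x), when y has law nu.\<close>
definition asf_backward :: "real \<Rightarrow> 'a::euclidean_space set \<Rightarrow> 'a measure \<Rightarrow> 'a measure" where
  "asf_backward \<eta> K \<nu> = density lborel (\<lambda>x. \<integral>\<^sup>+ y.
      ennreal (exp (- ((norm (x - y))^2) / (2 * \<eta>)) * indicator K x) / asf_Z \<eta> K y \<partial>\<nu>)"

definition asf_x_law :: "real \<Rightarrow> 'a::euclidean_space set \<Rightarrow> 'a measure \<Rightarrow> nat \<Rightarrow> 'a measure" where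
  "asf_x_law \<eta> K \<mu>0 k = ((asf_backward \<eta> K \<circ> asf_forward \<eta>) ^^ k) \<mu>0"

definition asf_y_law :: "real \<Rightarrow> 'a::euclidean_space set \<Rightarrow> 'a measure \<Rightarrow> nat \<Rightarrow> 'a measure" where
  "asf_y_law \<eta> K \<mu>0 k = asf_forward \<eta> (asf_x_law \<eta> K \<mu>0 k)"

definition P1 :: "real \<Rightarrow> 'a::euclidean_space set \<Rightarrow> 'a \<Rightarrow> 'a \<Rightarrow> real" where
  "P1 \<eta> K y x = (norm (x - closest_point K y))^2 / (2 * \<eta>)
                 + (norm (closest_point K y - y))^2 / (2 * \<eta>)"

definition n_trials :: "real \<Rightarrow> 'a::euclidean_space set \<Rightarrow> 'a \<Rightarrow> ennreal" where
  "n_trials \<eta> K y = (\<integral>\<^sup>+ x. ennreal (exp (- P1 \<eta> K y x)) \<partial>lborel) / asf_Z \<eta> K y"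

definition warm :: "real \<Rightarrow> 'a measure \<Rightarrow> 'a measure \<Rightarrow> bool" where
  "warm M \<mu>0 \<pi> \<longleftrightarrow> absolutely_continuous \<pi> \<mu>0 \<and> (AE x in \<pi>. RN_deriv \<pi> \<mu>0 x \<le> ennreal M)"

end

theory Submission
  imports Defs "HOL-Real_Asymp.Real_Asymp"
begin
lemma gauss1:
  fixes \<sigma> \<mu> :: real assumes "\<sigma> > 0"
  shows "(\<integral>\<^sup>+x. ennreal (exp (-(x - \<mu>)\<^sup>2 / (2 * \<sigma>\<^sup>2))) \<partial>lborel) = ennreal (sqrt (2 * pi * \<sigma>\<^sup>2))"
proof -
  interpret p: prob_space "density lborel (\<lambda>x. ennreal (normal_density \<mu> \<sigma> x))"
    using prob_space_normal_density[OF assms] .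
  have 1: "(\<integral>\<^sup>+x. ennreal (normal_density \<mu> \<sigma> x) \<partial>lborel) = 1"
    using p.emeasure_space_1 by (simp add: emeasure_density)
  have "(\<lambda>x. ennreal (exp (-(x - \<mu>)\<^sup>2 / (2 * \<sigma>\<^sup>2)))) = (\<lambda>x. ennreal (sqrt (2 * pi * \<sigma>\<^sup>2)) * ennreal (normal_density \<mu> \<sigma> x))"
    using assms by (auto simp: normal_density_def ennreal_mult''[symmetric])
  then show ?thesis by (simp add: nn_integral_cmult 1)
qed

lemma gauss0:
  fixes \<eta> :: real assumes "\<eta> > 0"
  shows "(\<integral>\<^sup>+x. ennreal (exp (-(norm (x::'a::euclidean_space))\<^sup>2 / (2 * \<eta>))) \<partial>lborel) = ennreal (sqrt (2 * pi * \<eta>) ^ DIM('a))"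
proof -
  have s: "\<eta> = (sqrt \<eta>)\<^sup>2" using assms by simp
  have eq: "ennreal (exp (-(norm x)\<^sup>2 / (2 * \<eta>))) = (\<Prod>b\<in>Basis. ennreal (exp (-(x \<bullet> b - 0)\<^sup>2 / (2 * (sqrt \<eta>)\<^sup>2))))" for x :: 'a
  proof -
    have "(norm x)\<^sup>2 = (\<Sum>b\<in>Basis. (x \<bullet> b)\<^sup>2)"
      by (subst power2_norm_eq_inner, subst euclidean_inner) (simp add: power2_eq_square)
    then have "-(norm x)\<^sup>2 / (2 * \<eta>) = (\<Sum>b\<in>Basis. -(x \<bullet> b - 0)\<^sup>2 / (2 * (sqrt \<eta>)\<^sup>2))"
      using assms by (simp add: sum_divide_distrib[symmetric] sum_negf)
    then show ?thesis by (simp add: exp_sum prod_ennreal)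
  qed
  have "(\<integral>\<^sup>+x. ennreal (exp (-(norm (x::'a))\<^sup>2 / (2 * \<eta>))) \<partial>lborel)
     = (\<integral>\<^sup>+x. (\<Prod>b\<in>Basis. (\<lambda>b t. ennreal (exp (-(t - 0)\<^sup>2 / (2 * (sqrt \<eta>)\<^sup>2)))) b ((x::'a) \<bullet> b)) \<partial>lborel)"
    by (simp only: eq)
  also have "\<dots> = (\<Prod>b\<in>(Basis::'a set). \<integral>\<^sup>+t. ennreal (exp (-(t - 0)\<^sup>2 / (2 * (sqrt \<eta>)\<^sup>2))) \<partial>lborel)"
    by (rule nn_integral_lborel_prod) auto
  also have "\<dots> = (\<Prod>b\<in>(Basis::'a set). ennreal (sqrt (2 * pi * (sqrt \<eta>)\<^sup>2)))"
    using assms by (simp only: gauss1[of "sqrt \<eta>"] real_sqrt_gt_zero)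
  also have "\<dots> = ennreal (sqrt (2 * pi * \<eta>) ^ DIM('a))"
    using assms by (simp add: ennreal_power)
  finally show ?thesis .
qed

lemma gaussT:
  fixes \<eta> :: real and a :: "'a::euclidean_space" assumes "\<eta> > 0"
  shows "(\<integral>\<^sup>+x. ennreal (exp (-(norm (x - a))\<^sup>2 / (2 * \<eta>))) \<partial>lborel) = ennreal (sqrt (2 * pi * \<eta>) ^ DIM('a))"
proof -
  have "(\<integral>\<^sup>+x. ennreal (exp (-(norm (x - a))\<^sup>2 / (2 * \<eta>))) \<partial>lborel)
      = (\<integral>\<^sup>+x. ennreal (exp (-(norm (x - a))\<^sup>2 / (2 * \<eta>))) \<partial>(distr lborel borel ((+) a)))"
    by (simp add: lborel_distr_plus)
  also have "\<dots> = (\<integral>\<^sup>+x. ennreal (exp (-(norm (x::'a))\<^sup>2 / (2 * \<eta>))) \<partial>lborel)"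
    by (subst nn_integral_distr) auto
  finally show ?thesis using gauss0[OF assms] by simp
qed
lemma gauss_dens_eq:
  assumes "\<eta> > 0"
  shows "gauss_dens \<eta> (z::'a::euclidean_space) = exp (-(norm z)\<^sup>2 / (2 * \<eta>)) / sqrt (2 * pi * \<eta>) ^ DIM('a)"
proof -
  define a where "a = 2 * pi * \<eta>"
  define n where "n = real DIM('a)"
  have p: "a > 0" using assms by (simp add: a_def)
  have 1: "sqrt a ^ DIM('a) = a powr (n / 2)"
  proof -
    have "sqrt a ^ DIM('a) = (a powr (1/2)) powr n"
      using p by (simp add: powr_half_sqrt powr_realpow n_def)
    also have "\<dots> = a powr (n / 2)"
      by (simp add: powr_powr)
    finally show ?thesis .
  qed
  have 2: "a powr (- n / 2) = inverse (a powr (n / 2))"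
    by (simp only: minus_divide_left[symmetric] powr_minus)
  have "gauss_dens \<eta> z = a powr (- n / 2) * exp (-(norm z)\<^sup>2 / (2 * \<eta>))"
    by (simp only: gauss_dens_def a_def n_def)
  also have "\<dots> = inverse (a powr (n / 2)) * exp (-(norm z)\<^sup>2 / (2 * \<eta>))"
    by (simp only: 2)
  also have "\<dots> = exp (-(norm z)\<^sup>2 / (2 * \<eta>)) / sqrt a ^ DIM('a)"
    by (simp only: 1 divide_inverse_commute)
  finally show ?thesis by (simp only: a_def)
qed
lemma G_tendsto: "((\<lambda>x::real. exp (- (x - 1)\<^sup>2 / 2)) \<longlongrightarrow> 0) at_top"
proof -
  have "filterlim (\<lambda>x::real. (x - 1)\<^sup>2 / 2) at_top at_top"
    by real_asymp
  then have "filterlim (\<lambda>x::real. - ((x - 1)\<^sup>2 / 2)) at_bot at_top"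
    by (simp add: filterlim_uminus_at_top)
  then show ?thesis
    using filterlim_compose[OF exp_at_bot] by (simp add: o_def)
qed

lemma G_int: "(\<integral>\<^sup>+x. ennreal (exp (- (x - 1)\<^sup>2 / 2)) \<partial>lborel) = ennreal (sqrt (2 * pi))"
  using gauss1[of 1 1] by simp

lemma Ia: "(\<integral>\<^sup>+x. ennreal ((x - 1) * exp (- (x - 1)\<^sup>2 / 2)) * indicator {1..} x \<partial>lborel) = 1"
proof -
  have "(\<integral>\<^sup>+x. ennreal ((x - 1) * exp (- (x - 1)\<^sup>2 / 2)) * indicator {1..} x \<partial>lborel)
      = ennreal (0 - (- exp (- (1 - 1)\<^sup>2 / 2)))"
  proof (rule nn_integral_FTC_atLeast[where F="\<lambda>x. - exp (- (x - 1)\<^sup>2 / 2)" and T=0])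
    show "(\<lambda>x::real. (x - 1) * exp (- (x - 1)\<^sup>2 / 2)) \<in> borel_measurable borel" by measurable
    show "((\<lambda>x. - exp (- (x - 1)\<^sup>2 / 2)) has_real_derivative (x - 1) * exp (- (x - 1)\<^sup>2 / 2)) (at x)" if "1 \<le> x" for x :: real
      by (auto intro!: derivative_eq_intros simp: power2_eq_square field_simps)
    show "0 \<le> (x - 1) * exp (- (x - 1)\<^sup>2 / 2)" if "1 \<le> x" for x :: real using that by simp
    show "((\<lambda>x::real. - exp (- (x - 1)\<^sup>2 / 2)) \<longlongrightarrow> 0) at_top"
      using tendsto_minus[OF G_tendsto] by simp
  qed
  then show ?thesis by simp
qed

lemma Ib: "(\<integral>\<^sup>+x. ennreal ((1 - x) * exp (- (x - 1)\<^sup>2 / 2)) * indicator {0..1} x \<partial>lborel) = ennreal (1 - exp (- 1 / 2))"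
proof -
  let ?f = "\<lambda>x::real. (1 - x) * exp (- (x - 1)\<^sup>2 / 2)"
  have c: "continuous_on {0..1} ?f" by (intro continuous_intros) auto
  have I: "integral\<^sup>L lborel (\<lambda>x. indicator {0..1} x *\<^sub>R ?f x) = exp (- (1 - 1)\<^sup>2 / 2) - exp (- (0 - 1)\<^sup>2 / 2)"
  proof (rule integral_FTC_atLeastAtMost)
    fix x :: real
    show "((\<lambda>x. exp (- (x - 1)\<^sup>2 / 2)) has_vector_derivative ?f x) (at x within {0..1})"
      unfolding has_real_derivative_iff_has_vector_derivative[symmetric]
      by (auto intro!: derivative_eq_intros simp: power2_eq_square field_simps)
  qed (use c in auto)
  have int: "integrable lborel (\<lambda>x. indicator {0..1} x *\<^sub>R ?f x)"
    using borel_integrable_atLeastAtMost'[OF c] unfolding set_integrable_def .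
  have "(\<integral>\<^sup>+x. ennreal (?f x) * indicator {0..1} x \<partial>lborel) = (\<integral>\<^sup>+x. ennreal (indicator {0..1} x *\<^sub>R ?f x) \<partial>lborel)"
    by (intro nn_integral_cong) (auto simp: indicator_def)
  also have "\<dots> = ennreal (integral\<^sup>L lborel (\<lambda>x. indicator {0..1} x *\<^sub>R ?f x))"
    by (rule nn_integral_eq_integral[OF int]) (auto simp: indicator_def)
  also have "\<dots> = ennreal (1 - exp (- 1 / 2))" unfolding I by simp
  finally show ?thesis .
qed

lemma H_bound: "(\<integral>\<^sup>+x. ennreal (x * exp (- (x - 1)\<^sup>2 / 2)) * indicator {0..} x \<partial>lborel) \<le> ennreal (exp (- 1 / 2) + sqrt (2 * pi))"
proof -
  define G where "G = (\<lambda>x::real. exp (- (x - 1)\<^sup>2 / 2))"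
  define q where "q = exp (- 1 / 2 :: real)"
  have q: "0 < q" "q < 1" unfolding q_def by auto
  have [measurable]: "G \<in> borel_measurable borel" unfolding G_def by measurable
  define X where "X = (\<integral>\<^sup>+x. ennreal (x * G x) * indicator {0..1} x \<partial>lborel)"
  define A where "A = (\<integral>\<^sup>+x. ennreal (G x) * indicator {0..1} x \<partial>lborel)"
  define B where "B = (\<integral>\<^sup>+x. ennreal (G x) * indicator {1..} x \<partial>lborel)"
  have "(\<integral>\<^sup>+x. ennreal (x * G x) * indicator {0..} x \<partial>lborel)
      \<le> (\<integral>\<^sup>+x. ennreal (x * G x) * indicator {0..1} x + ennreal (x * G x) * indicator {1..} x \<partial>lborel)"
    by (intro nn_integral_mono) (auto simp: indicator_def)
  also have "\<dots> = X + (\<integral>\<^sup>+x. ennreal (x * G x) * indicator {1..} x \<partial>lborel)"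
    unfolding X_def by (rule nn_integral_add) auto
  also have "(\<integral>\<^sup>+x. ennreal (x * G x) * indicator {1..} x \<partial>lborel)
      = (\<integral>\<^sup>+x. ennreal ((x - 1) * G x) * indicator {1..} x + ennreal (G x) * indicator {1..} x \<partial>lborel)"
    by (intro nn_integral_cong) (auto simp: indicator_def G_def ennreal_plus[symmetric] algebra_simps simp del: ennreal_plus)
  also have "\<dots> = 1 + B"
    unfolding B_def using Ia unfolding G_def by (subst nn_integral_add) auto
  finally have H1: "(\<integral>\<^sup>+x. ennreal (x * G x) * indicator {0..} x \<partial>lborel) \<le> X + (1 + B)" .
  have "A = (\<integral>\<^sup>+x. ennreal (x * G x) * indicator {0..1} x + ennreal ((1 - x) * G x) * indicator {0..1} x \<partial>lborel)"
    unfolding A_def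
    by (intro nn_integral_cong) (auto simp: indicator_def G_def ennreal_plus[symmetric] algebra_simps simp del: ennreal_plus)
  also have "\<dots> = X + ennreal (1 - q)"
    unfolding X_def q_def using Ib unfolding G_def by (subst nn_integral_add) auto
  finally have H2: "A = X + ennreal (1 - q)" .
  have "A + B = (\<integral>\<^sup>+x. ennreal (G x) * indicator {0..1} x + ennreal (G x) * indicator {1..} x \<partial>lborel)"
    unfolding A_def B_def by (subst nn_integral_add) auto
  also have "\<dots> \<le> (\<integral>\<^sup>+x. ennreal (G x) \<partial>lborel)"
  proof (rule nn_integral_mono_AE)
    show "AE x in lborel. ennreal (G x) * indicator {0..1} x + ennreal (G x) * indicator {1..} x \<le> ennreal (G x)"
      using AE_lborel_singleton[of "1::real"] by eventually_elim (auto simp: indicator_def)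
  qed
  also have "\<dots> = ennreal (sqrt (2 * pi))" unfolding G_def by (rule G_int)
  finally have H3: "A + B \<le> ennreal (sqrt (2 * pi))" .
  have e1: "ennreal (1 - q) + ennreal q = 1"
    using q by (subst ennreal_plus[symmetric]) auto
  have "X + (1 + B) = X + ennreal (1 - q) + B + ennreal q"
    unfolding e1[symmetric] by (simp only: add_ac)
  also have "\<dots> = A + B + ennreal q" unfolding H2 by (simp only: add_ac)
  also have "\<dots> \<le> ennreal (sqrt (2 * pi)) + ennreal q" using H3 by (rule add_right_mono)
  also have "\<dots> = ennreal (exp (- 1 / 2) + sqrt (2 * pi))"
    using q unfolding q_def by (subst ennreal_plus[symmetric]) (auto simp: add.commute)
  finally have "(\<integral>\<^sup>+x. ennreal (x * G x) * indicator {0..} x \<partial>lborel) \<le> ennreal (exp (- 1 / 2) + sqrt (2 * pi))"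
    using H1 by (rule order_trans[rotated])
  then show ?thesis by (simp add: G_def)
qed

lemma J_bound:
  fixes d :: real assumes d: "d > 0"
  shows "(\<integral>\<^sup>+t. ennreal (d\<^sup>2 * t * exp (- (d * t)\<^sup>2 / 2 + d * t)) * indicator {0..} t \<partial>lborel) \<le> ennreal (1 + sqrt (2 * pi * exp 1))"
proof -
  let ?H = "(\<integral>\<^sup>+x. ennreal (x * exp (- (x - 1)\<^sup>2 / 2)) * indicator {0..} x \<partial>lborel)"
  have "(\<integral>\<^sup>+t. ennreal (d\<^sup>2 * t * exp (- (d * t)\<^sup>2 / 2 + d * t)) * indicator {0..} t \<partial>lborel)
     = ennreal \<bar>1 / d\<bar> * (\<integral>\<^sup>+x. ennreal (d\<^sup>2 * (0 + 1 / d * x) * exp (- (d * (0 + 1 / d * x))\<^sup>2 / 2 + d * (0 + 1 / d * x))) * indicator {0..} (0 + 1 / d * x) \<partial>lborel)"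
    by (rule nn_integral_real_affine) (use d in auto)
  also have "(\<integral>\<^sup>+x. ennreal (d\<^sup>2 * (0 + 1 / d * x) * exp (- (d * (0 + 1 / d * x))\<^sup>2 / 2 + d * (0 + 1 / d * x))) * indicator {0..} (0 + 1 / d * x) \<partial>lborel)
     = (\<integral>\<^sup>+x. (ennreal d * ennreal (exp (1 / 2))) * (ennreal (x * exp (- (x - 1)\<^sup>2 / 2)) * indicator {0..} x) \<partial>lborel)"
  proof (intro nn_integral_cong)
    fix x :: real
    have e: "exp (- (d * (0 + 1 / d * x))\<^sup>2 / 2 + d * (0 + 1 / d * x)) = exp (1 / 2) * exp (- (x - 1)\<^sup>2 / 2)"
      using d by (simp add: exp_add[symmetric] power2_eq_square field_simps)
    have "d\<^sup>2 * (0 + 1 / d * x) = d * x" using d by (simp add: power2_eq_square)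
    then have "ennreal (d\<^sup>2 * (0 + 1 / d * x) * exp (- (d * (0 + 1 / d * x))\<^sup>2 / 2 + d * (0 + 1 / d * x)))
        = ennreal (d * exp (1 / 2) * (x * exp (- (x - 1)\<^sup>2 / 2)))"
      unfolding e by (simp add: mult_ac)
    moreover have "indicator {0..} (0 + 1 / d * x) = (indicator {0..} x :: ennreal)"
      using d by (simp add: indicator_def zero_le_divide_iff)
    ultimately show "ennreal (d\<^sup>2 * (0 + 1 / d * x) * exp (- (d * (0 + 1 / d * x))\<^sup>2 / 2 + d * (0 + 1 / d * x))) * indicator {0..} (0 + 1 / d * x)
        = (ennreal d * ennreal (exp (1 / 2))) * (ennreal (x * exp (- (x - 1)\<^sup>2 / 2)) * indicator {0..} x)"
      using d by (auto simp: indicator_def ennreal_mult[symmetric] mult_ac simp del: ennreal_mult)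
  qed
  also have "\<dots> = (ennreal d * ennreal (exp (1 / 2))) * ?H"
    by (rule nn_integral_cmult) measurable
  finally have "(\<integral>\<^sup>+t. ennreal (d\<^sup>2 * t * exp (- (d * t)\<^sup>2 / 2 + d * t)) * indicator {0..} t \<partial>lborel)
      = (ennreal (1 / d) * ennreal d) * ennreal (exp (1 / 2)) * ?H"
    using d by (simp add: mult_ac)
  also have "ennreal (1 / d) * ennreal d = 1"
    using d by (subst ennreal_mult[symmetric]) auto
  also have "1 * ennreal (exp (1 / 2)) * ?H \<le> ennreal (exp (1 / 2)) * ennreal (exp (- 1 / 2) + sqrt (2 * pi))"
    using H_bound by (simp add: mult_left_mono)
  also have "\<dots> = ennreal (exp (1 / 2) * (exp (- 1 / 2) + sqrt (2 * pi)))"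
    by (subst ennreal_mult[symmetric]) auto
  also have "exp (1 / 2) * (exp (- 1 / 2) + sqrt (2 * pi)) = 1 + sqrt (2 * pi * exp 1)"
  proof -
    have "sqrt (exp 1) = exp (1 / 2 :: real)"
      by (rule real_sqrt_unique) (simp_all add: power2_eq_square exp_add[symmetric])
    moreover have "exp (1 / 2) * exp (- 1 / 2) = (1::real)" by (simp add: exp_add[symmetric])
    ultimately show ?thesis by (simp add: real_sqrt_mult distrib_left mult_ac)
  qed
  finally show ?thesis .
qed

lemma tail_rep:
  fixes d s :: real assumes d: "d > 0" and s: "s \<ge> 0"
  shows "ennreal (exp (- (d * s)\<^sup>2 / 2)) = (\<integral>\<^sup>+t. ennreal (d\<^sup>2 * t * exp (- (d * t)\<^sup>2 / 2)) * indicator {s..} t \<partial>lborel)"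
proof -
  have "(\<integral>\<^sup>+t. ennreal (d\<^sup>2 * t * exp (- (d * t)\<^sup>2 / 2)) * indicator {s..} t \<partial>lborel) = ennreal (0 - (- exp (- (d * s)\<^sup>2 / 2)))"
  proof (rule nn_integral_FTC_atLeast[where F="\<lambda>t. - exp (- (d * t)\<^sup>2 / 2)" and T=0])
    show "(\<lambda>t::real. d\<^sup>2 * t * exp (- (d * t)\<^sup>2 / 2)) \<in> borel_measurable borel" by measurable
    show "((\<lambda>t. - exp (- (d * t)\<^sup>2 / 2)) has_real_derivative d\<^sup>2 * t * exp (- (d * t)\<^sup>2 / 2)) (at t)" if "s \<le> t" for t :: real
      by (auto intro!: derivative_eq_intros simp: power2_eq_square field_simps)
    show "0 \<le> d\<^sup>2 * t * exp (- (d * t)\<^sup>2 / 2)" if "s \<le> t" for t :: real using that s by simp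
    have "filterlim (\<lambda>t::real. (d * t)\<^sup>2 / 2) at_top at_top"
      using d by real_asymp
    then have "filterlim (\<lambda>t::real. - ((d * t)\<^sup>2 / 2)) at_bot at_top"
      by (simp add: filterlim_uminus_at_top)
    then have "((\<lambda>t::real. exp (- (d * t)\<^sup>2 / 2)) \<longlongrightarrow> 0) at_top"
      using filterlim_compose[OF exp_at_bot] by (simp add: o_def)
    then show "((\<lambda>t::real. - exp (- (d * t)\<^sup>2 / 2)) \<longlongrightarrow> 0) at_top"
      using tendsto_minus by fastforce
  qed
  then show ?thesis by simp
qed

lemma emeasure_scale:
  fixes K :: "'a::euclidean_space set" assumes "closed K" and a: "a > 0"
  shows "emeasure lborel ((\<lambda>x. a *\<^sub>R x) ` K) = ennreal (a ^ DIM('a)) * emeasure lborel K"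
proof -
  have cl: "closed ((\<lambda>x. a *\<^sub>R x) ` K)" using assms closed_scaling by blast
  have "emeasure lborel ((\<lambda>x. a *\<^sub>R x) ` K)
      = emeasure (density (distr lborel borel (\<lambda>x. 0 + a *\<^sub>R x)) (\<lambda>_. \<bar>a\<bar> ^ DIM('a))) ((\<lambda>x. a *\<^sub>R x) ` K)"
    using lborel_affine[where c=a and t="0::'a"] a by simp
  also have "\<dots> = ennreal (a ^ DIM('a)) * emeasure lborel ((\<lambda>x. a *\<^sub>R x) -` ((\<lambda>x. a *\<^sub>R x) ` K))"
    using cl a by (simp add: emeasure_density emeasure_distr nn_integral_cmult_indicator)
  also have "(\<lambda>x. a *\<^sub>R x) -` ((\<lambda>x. a *\<^sub>R x) ` K) = K"
    using a by auto
  finally show ?thesis .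
qed

lemma sub_scale:
  fixes K :: "'a::euclidean_space set" and t :: real and y p :: 'a
  assumes Kc: "closed K" and Kconv: "convex K" and Kb: "ball 0 1 \<subseteq> K"
    and p: "p \<in> K" and t: "t \<ge> 0" and dist: "norm (y - p) \<le> t"
  shows "y \<in> (\<lambda>x. (1 + t) *\<^sub>R x) ` K"
proof -
  have cb: "cball 0 1 \<subseteq> K"
    using closure_minimal[OF Kb Kc] by (simp add: closure_ball)
  have "(1 / (1 + t)) *\<^sub>R y \<in> K"
  proof (cases "t = 0")
    case True then show ?thesis using dist p by simp
  next
    case False
    then have tp: "t > 0" using t by simp
    let ?u = "(1 / t) *\<^sub>R (y - p)"
    have "norm ?u = norm (y - p) / t" using tp by simp
    also have "\<dots> \<le> 1" using dist tp by simp
    finally have "?u \<in> cball 0 1" by simp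
    then have "?u \<in> K" using cb by blast
    then have "(1 / (1 + t)) *\<^sub>R p + (t / (1 + t)) *\<^sub>R ?u \<in> K"
      using p tp by (intro convexD[OF Kconv]) (auto simp: field_simps)
    also have "(1 / (1 + t)) *\<^sub>R p + (t / (1 + t)) *\<^sub>R ?u = (1 / (1 + t)) *\<^sub>R y"
      using tp by (simp add: algebra_simps)
    finally show ?thesis .
  qed
  moreover have "y = (1 + t) *\<^sub>R ((1 / (1 + t)) *\<^sub>R y)" using t by simp
  ultimately show ?thesis by blast
qed

lemma Vmain:
  fixes K :: "'a::euclidean_space set"
  assumes Kc: "closed K" and Kconv: "convex K" and Kne: "K \<noteq> {}" and Kb: "ball 0 1 \<subseteq> K"
  shows "(\<integral>\<^sup>+y. ennreal (exp (- (real DIM('a) * norm (closest_point K y - y))\<^sup>2 / 2)) \<partial>lborel)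
         \<le> emeasure lborel K * ennreal (1 + sqrt (2 * pi * exp 1))"
proof -
  define d where "d = real DIM('a)"
  have d: "d > 0" unfolding d_def by simp
  define \<phi> where "\<phi> = (\<lambda>y. norm (closest_point K y - y))"
  have cphi: "continuous_on UNIV \<phi>" unfolding \<phi>_def
    by (intro continuous_intros continuous_on_closest_point Kconv Kc Kne)
  have [measurable]: "\<phi> \<in> borel_measurable borel"
    by (rule borel_measurable_continuous_onI[OF cphi])
  define w where "w = (\<lambda>t::real. d\<^sup>2 * t * exp (- (d * t)\<^sup>2 / 2))"
  have [measurable]: "w \<in> borel_measurable borel" unfolding w_def by measurable
  have [measurable]: "Measurable.pred (borel \<Otimes>\<^sub>M borel) (\<lambda>x::'a \<times> real. snd x \<in> {\<phi> (fst x)..})"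
    unfolding atLeast_iff by measurable
  have PSF: "pair_sigma_finite (lborel :: 'a measure) (lborel :: real measure)"
    by (simp add: pair_sigma_finite_def lborel.sigma_finite_measure_axioms)
  have "(\<integral>\<^sup>+y. ennreal (exp (- (d * \<phi> y)\<^sup>2 / 2)) \<partial>lborel)
      = (\<integral>\<^sup>+y. (\<integral>\<^sup>+t. ennreal (w t) * indicator {\<phi> y..} t \<partial>lborel) \<partial>lborel)"
    unfolding w_def by (intro nn_integral_cong tail_rep d) (simp add: \<phi>_def)
  also have "\<dots> = (\<integral>\<^sup>+t. (\<integral>\<^sup>+y. ennreal (w t) * indicator {\<phi> y..} t \<partial>lborel) \<partial>lborel)"
    by (rule pair_sigma_finite.Fubini'[OF PSF, symmetric]) measurable
  also have "\<dots> \<le> (\<integral>\<^sup>+t. emeasure lborel K * (ennreal (d\<^sup>2 * t * exp (- (d * t)\<^sup>2 / 2 + d * t)) * indicator {0..} t) \<partial>lborel)"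
  proof (intro nn_integral_mono)
    fix t :: real
    have cl: "closed {y. \<phi> y \<le> t}"
      by (rule closed_Collect_le[OF cphi]) simp
    have "(\<integral>\<^sup>+y. ennreal (w t) * indicator {\<phi> y..} t \<partial>lborel) = (\<integral>\<^sup>+y. ennreal (w t) * indicator {y. \<phi> y \<le> t} y \<partial>lborel)"
      by (intro nn_integral_cong) (simp add: indicator_def)
    also have "\<dots> = ennreal (w t) * emeasure lborel {y. \<phi> y \<le> t}"
      using cl by (intro nn_integral_cmult_indicator) simp
    also have "\<dots> \<le> emeasure lborel K * (ennreal (d\<^sup>2 * t * exp (- (d * t)\<^sup>2 / 2 + d * t)) * indicator {0..} t)"
    proof (cases "t \<ge> 0")
      case False
      then have "w t \<le> 0" unfolding w_def using d by (simp add: mult_nonneg_nonpos2 mult_nonneg_nonpos)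
      then show ?thesis by (simp add: ennreal_eq_0_iff[THEN iffD2])
    next
      case True
      have "{y. \<phi> y \<le> t} \<subseteq> (\<lambda>x. (1 + t) *\<^sub>R x) ` K"
      proof
        fix y assume "y \<in> {y. \<phi> y \<le> t}"
        then have "norm (y - closest_point K y) \<le> t" by (simp add: \<phi>_def norm_minus_commute)
        then show "y \<in> (\<lambda>x. (1 + t) *\<^sub>R x) ` K"
          using sub_scale[OF Kc Kconv Kb closest_point_in_set[OF Kc Kne] True] by blast
      qed
      then have "emeasure lborel {y. \<phi> y \<le> t} \<le> emeasure lborel ((\<lambda>x. (1 + t) *\<^sub>R x) ` K)"
        using closed_scaling[OF Kc] by (intro emeasure_mono) auto
      also have "\<dots> = ennreal ((1 + t) ^ DIM('a)) * emeasure lborel K"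
        using True by (intro emeasure_scale Kc) auto
      finally have m: "emeasure lborel {y. \<phi> y \<le> t} \<le> ennreal ((1 + t) ^ DIM('a)) * emeasure lborel K" .
      have "ennreal (w t) * emeasure lborel {y. \<phi> y \<le> t} \<le> ennreal (w t) * (ennreal ((1 + t) ^ DIM('a)) * emeasure lborel K)"
        by (rule mult_left_mono[OF m]) simp
      also have "\<dots> = emeasure lborel K * ennreal (w t * (1 + t) ^ DIM('a))"
        using True d unfolding w_def by (simp add: ennreal_mult mult_ac)
      also have "\<dots> \<le> emeasure lborel K * ennreal (d\<^sup>2 * t * exp (- (d * t)\<^sup>2 / 2 + d * t))"
      proof (intro mult_left_mono ennreal_leI)
        have "(1 + t) ^ DIM('a) \<le> exp t ^ DIM('a)"
          using True by (intro power_mono) (auto simp: exp_ge_add_one_self add.commute)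
        also have "\<dots> = exp (d * t)" unfolding d_def by (simp add: exp_of_nat_mult)
        finally have "w t * (1 + t) ^ DIM('a) \<le> w t * exp (d * t)"
          using True d unfolding w_def by (intro mult_left_mono) auto
        also have "\<dots> = d\<^sup>2 * t * exp (- (d * t)\<^sup>2 / 2 + d * t)"
          unfolding w_def by (simp add: exp_add[symmetric] mult.assoc)
        finally show "w t * (1 + t) ^ DIM('a) \<le> d\<^sup>2 * t * exp (- (d * t)\<^sup>2 / 2 + d * t)" .
      qed simp
      finally show ?thesis using True by simp
    qed
    finally show "(\<integral>\<^sup>+y. ennreal (w t) * indicator {\<phi> y..} t \<partial>lborel) \<le> emeasure lborel K * (ennreal (d\<^sup>2 * t * exp (- (d * t)\<^sup>2 / 2 + d * t)) * indicator {0..} t)" .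
  qed
  also have "\<dots> = emeasure lborel K * (\<integral>\<^sup>+t. ennreal (d\<^sup>2 * t * exp (- (d * t)\<^sup>2 / 2 + d * t)) * indicator {0..} t \<partial>lborel)"
    by (rule nn_integral_cmult) measurable
  also have "\<dots> \<le> emeasure lborel K * ennreal (1 + sqrt (2 * pi * exp 1))"
    by (intro mult_left_mono J_bound d) simp
  finally show ?thesis unfolding d_def \<phi>_def .
qed

context
  fixes \<eta> :: real and K :: "'a::euclidean_space set" and R :: real
  assumes eta: "\<eta> > 0" and Kc: "closed K" and Kb: "ball 0 1 \<subseteq> K" and KR: "K \<subseteq> cball 0 R"
begin

lemma K_meas[measurable]: "K \<in> sets borel"
  using Kc by simp

lemma V_pos: "emeasure lborel K > 0"
proof -
  have "emeasure lborel (ball (0::'a) 1) \<le> emeasure lborel K"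
    using Kb by (intro emeasure_mono) auto
  moreover have "emeasure lborel (ball (0::'a) 1) > 0"
    by (simp add: emeasure_ball)
  ultimately show ?thesis by (rule less_le_trans[rotated])
qed

lemma V_fin: "emeasure lborel K < \<infinity>"
proof -
  have "emeasure lborel K \<le> emeasure lborel (cball (0::'a) R)"
    using KR by (intro emeasure_mono) auto
  then show ?thesis using emeasure_lborel_cball_finite[of "0::'a" R] by (rule le_less_trans)
qed

lemma Z_meas[measurable]: "asf_Z \<eta> K \<in> borel_measurable borel"
  unfolding asf_Z_def[abs_def] by measurable

lemma Z_le: "asf_Z \<eta> K y \<le> emeasure lborel K"
proof -
  have "asf_Z \<eta> K y \<le> (\<integral>\<^sup>+x. indicator K x \<partial>lborel)"
    unfolding asf_Z_def using eta
    by (intro nn_integral_mono) (auto simp: indicator_def)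
  then show ?thesis by simp
qed

lemma Z_fin: "asf_Z \<eta> K y < \<infinity>"
  using Z_le V_fin by (rule le_less_trans)

lemma Z_pos: "asf_Z \<eta> K y > 0"
proof -
  let ?m = "exp (- (R + norm y)\<^sup>2 / (2 * \<eta>))"
  have "(\<integral>\<^sup>+x. ennreal ?m * indicator K (x::'a) \<partial>lborel) \<le> asf_Z \<eta> K y"
    unfolding asf_Z_def
  proof (intro nn_integral_mono)
    fix x :: 'a assume "x \<in> space lborel"
    show "ennreal ?m * indicator K x \<le> ennreal (exp (- (norm (x - y))\<^sup>2 / (2 * \<eta>)) * indicator K x)"
    proof (cases "x \<in> K")
      case True
      then have "norm x \<le> R" using KR by auto
      then have "norm (x - y) \<le> R + norm y" using norm_triangle_ineq4[of x y] by simp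
      then have "(norm (x - y))\<^sup>2 \<le> (R + norm y)\<^sup>2" by (intro power_mono) auto
      then have "?m \<le> exp (- (norm (x - y))\<^sup>2 / (2 * \<eta>))" using eta
        by (simp add: divide_right_mono)
      then show ?thesis using True by simp
    qed simp
  qed
  moreover have "(\<integral>\<^sup>+x. ennreal ?m * indicator K (x::'a) \<partial>lborel) = ennreal ?m * emeasure lborel K"
    by (simp add: nn_integral_cmult)
  moreover have "ennreal ?m * emeasure lborel K > 0" using V_pos by (simp add: ennreal_zero_less_mult_iff)
  ultimately show ?thesis by (metis less_le_trans)
qed

lemma gauss_dens_meas[measurable]: "gauss_dens \<eta>' \<in> borel_measurable borel"
  unfolding gauss_dens_def[abs_def] by measurable

definition "GG = sqrt (2 * pi * \<eta>) ^ DIM('a)"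

lemma GG_pos: "GG > 0" unfolding GG_def using eta by simp

lemma gauss_int: "(\<integral>\<^sup>+x. ennreal (exp (-(norm (x - (a::'a)))\<^sup>2 / (2 * \<eta>))) \<partial>lborel) = ennreal GG"
  unfolding GG_def using gaussT[OF eta] .

lemma fwd_eq:
  assumes Dm[measurable]: "D \<in> borel_measurable borel"
  shows "asf_forward \<eta> (density lborel D) = density lborel (\<lambda>y. \<integral>\<^sup>+x. D x * ennreal (gauss_dens \<eta> (y - x)) \<partial>lborel)"
  unfolding asf_forward_def
  by (intro density_cong) (auto simp: nn_integral_density)

lemma fwd_meas:
  assumes Dm[measurable]: "D \<in> borel_measurable borel"
  shows "(\<lambda>y. \<integral>\<^sup>+x. D x * ennreal (gauss_dens \<eta> (y - x)) \<partial>lborel) \<in> borel_measurable borel"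
  by measurable

lemma fwd_bound:
  assumes Dm[measurable]: "D \<in> borel_measurable borel" and Db: "\<And>x. D x \<le> c * indicator K x"
  shows "(\<integral>\<^sup>+x. D x * ennreal (gauss_dens \<eta> (y - x)) \<partial>lborel) \<le> c * ennreal (1 / GG) * asf_Z \<eta> K y"
proof -
  have "(\<integral>\<^sup>+x. D x * ennreal (gauss_dens \<eta> (y - x)) \<partial>lborel)
     \<le> (\<integral>\<^sup>+x. (c * ennreal (1 / GG)) * ennreal (exp (- (norm (x - y))\<^sup>2 / (2 * \<eta>)) * indicator K x) \<partial>lborel)"
  proof (intro nn_integral_mono)
    fix x :: 'a
    have "gauss_dens \<eta> (y - x) = (1 / GG) * exp (- (norm (x - y))\<^sup>2 / (2 * \<eta>))"
      using gauss_dens_eq[OF eta, of "y - x"] by (simp add: GG_def norm_minus_commute)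
    then have e: "ennreal (gauss_dens \<eta> (y - x)) = ennreal (1 / GG) * ennreal (exp (- (norm (x - y))\<^sup>2 / (2 * \<eta>)))"
      using GG_pos by (simp only: ennreal_mult[symmetric] less_imp_le[OF GG_pos] exp_ge_zero divide_nonneg_nonneg zero_le_one)
    have "D x * ennreal (gauss_dens \<eta> (y - x)) \<le> c * indicator K x * (ennreal (1 / GG) * ennreal (exp (- (norm (x - y))\<^sup>2 / (2 * \<eta>))))"
      unfolding e by (rule mult_right_mono[OF Db]) simp
    then show "D x * ennreal (gauss_dens \<eta> (y - x)) \<le> (c * ennreal (1 / GG)) * ennreal (exp (- (norm (x - y))\<^sup>2 / (2 * \<eta>)) * indicator K x)"
      by (auto simp: indicator_def mult_ac)
  qed
  also have "\<dots> = c * ennreal (1 / GG) * asf_Z \<eta> K y"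
    unfolding asf_Z_def by (rule nn_integral_cmult) measurable
  finally show ?thesis .
qed
lemma cancelZ:
  fixes a e z :: ennreal assumes "z \<noteq> 0" "z < \<infinity>"
  shows "a * z * (e / z) = a * e"
proof -
  have "a * z * (e / z) = a * ((e * z) / z)"
    by (simp add: ennreal_times_divide mult_ac)
  also have "\<dots> = a * e" using assms by (simp add: ennreal_mult_divide_eq)
  finally show ?thesis .
qed

lemma bwd_eq:
  assumes Dm[measurable]: "D' \<in> borel_measurable borel"
  shows "asf_backward \<eta> K (density lborel D') = density lborel (\<lambda>x. \<integral>\<^sup>+y. D' y * (ennreal (exp (- (norm (x - y))\<^sup>2 / (2 * \<eta>)) * indicator K x) / asf_Z \<eta> K y) \<partial>lborel)"
  unfolding asf_backward_def
  by (intro density_cong) (auto simp: nn_integral_density)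

lemma bwd_meas:
  assumes Dm[measurable]: "D' \<in> borel_measurable borel"
  shows "(\<lambda>x. \<integral>\<^sup>+y. D' y * (ennreal (exp (- (norm (x - y))\<^sup>2 / (2 * \<eta>)) * indicator K x) / asf_Z \<eta> K y) \<partial>lborel) \<in> borel_measurable borel"
  by measurable

lemma bwd_bound:
  assumes Db: "\<And>y. D' y \<le> c * ennreal (1 / GG) * asf_Z \<eta> K y"
  shows "(\<integral>\<^sup>+y. D' y * (ennreal (exp (- (norm (x - y))\<^sup>2 / (2 * \<eta>)) * indicator K x) / asf_Z \<eta> K y) \<partial>lborel) \<le> c * indicator K x"
proof (cases "x \<in> K")
  case False then show ?thesis by simp
next
  case True
  have "(\<integral>\<^sup>+y. D' y * (ennreal (exp (- (norm (x - y))\<^sup>2 / (2 * \<eta>)) * indicator K x) / asf_Z \<eta> K y) \<partial>lborel)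
     \<le> (\<integral>\<^sup>+y. (c * ennreal (1 / GG)) * ennreal (exp (- (norm (y - x))\<^sup>2 / (2 * \<eta>))) \<partial>lborel)"
  proof (intro nn_integral_mono)
    fix y :: 'a
    have "D' y * (ennreal (exp (- (norm (x - y))\<^sup>2 / (2 * \<eta>)) * indicator K x) / asf_Z \<eta> K y)
       \<le> c * ennreal (1 / GG) * asf_Z \<eta> K y * (ennreal (exp (- (norm (x - y))\<^sup>2 / (2 * \<eta>)) * indicator K x) / asf_Z \<eta> K y)"
      by (rule mult_right_mono[OF Db]) simp
    also have "\<dots> = c * ennreal (1 / GG) * ennreal (exp (- (norm (x - y))\<^sup>2 / (2 * \<eta>)) * indicator K x)"
      using Z_pos[of y] Z_fin[of y] by (intro cancelZ) auto
    finally show "D' y * (ennreal (exp (- (norm (x - y))\<^sup>2 / (2 * \<eta>)) * indicator K x) / asf_Z \<eta> K y)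
       \<le> (c * ennreal (1 / GG)) * ennreal (exp (- (norm (y - x))\<^sup>2 / (2 * \<eta>)))"
      using True by (simp add: norm_minus_commute)
  qed
  also have "\<dots> = c * ennreal (1 / GG) * ennreal GG"
    using gauss_int[of x] by (subst nn_integral_cmult) auto
  also have "\<dots> = c * indicator K x"
  proof -
    have "ennreal (1 / GG) * ennreal GG = ennreal (1 / GG * GG)"
      by (rule ennreal_mult[symmetric]) (use GG_pos in auto)
    also have "\<dots> = 1" using GG_pos by simp
    finally show ?thesis using True by (simp add: mult.assoc)
  qed
  finally show ?thesis .
qed
lemma n_trials_eq:
  "n_trials \<eta> K y = ennreal (exp (- (norm (closest_point K y - y))\<^sup>2 / (2 * \<eta>))) * ennreal GG / asf_Z \<eta> K y"
proof -
  let ?p = "closest_point K y"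
  have "(\<integral>\<^sup>+x. ennreal (exp (- P1 \<eta> K y x)) \<partial>lborel)
      = (\<integral>\<^sup>+x. ennreal (exp (- (norm (?p - y))\<^sup>2 / (2 * \<eta>))) * ennreal (exp (- (norm (x - ?p))\<^sup>2 / (2 * \<eta>))) \<partial>lborel)"
    by (intro nn_integral_cong) (simp add: P1_def ennreal_mult[symmetric] exp_add[symmetric] field_simps)
  also have "\<dots> = ennreal (exp (- (norm (?p - y))\<^sup>2 / (2 * \<eta>))) * ennreal GG"
    using gauss_int[of ?p] by (subst nn_integral_cmult) auto
  finally show ?thesis unfolding n_trials_def by simp
qed

lemma final_bound:
  assumes Kconv: "convex K" and Kne: "K \<noteq> {}"
  assumes Dm[measurable]: "D' \<in> borel_measurable borel" and Db: "\<And>y. D' y \<le> c * ennreal (1 / GG) * asf_Z \<eta> K y"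
  shows "(\<integral>\<^sup>+y. n_trials \<eta> K y \<partial>density lborel D') \<le> c * (\<integral>\<^sup>+y. ennreal (exp (- (norm (closest_point K y - y))\<^sup>2 / (2 * \<eta>))) \<partial>lborel)"
proof -
  have [measurable]: "closest_point K \<in> borel_measurable borel"
    by (intro borel_measurable_continuous_onI continuous_on_closest_point Kconv Kc Kne)
  have nm: "n_trials \<eta> K \<in> borel_measurable borel"
    unfolding n_trials_eq[abs_def] by measurable
  have "(\<integral>\<^sup>+y. n_trials \<eta> K y \<partial>density lborel D') = (\<integral>\<^sup>+y. D' y * n_trials \<eta> K y \<partial>lborel)"
    using nm by (simp add: nn_integral_density)
  also have "\<dots> \<le> (\<integral>\<^sup>+y. c * ennreal (exp (- (norm (closest_point K y - y))\<^sup>2 / (2 * \<eta>))) \<partial>lborel)"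
  proof (intro nn_integral_mono)
    fix y :: 'a
    have "D' y * n_trials \<eta> K y \<le> c * ennreal (1 / GG) * asf_Z \<eta> K y * n_trials \<eta> K y"
      by (rule mult_right_mono[OF Db]) simp
    also have "\<dots> = c * ennreal (1 / GG) * (ennreal (exp (- (norm (closest_point K y - y))\<^sup>2 / (2 * \<eta>))) * ennreal GG)"
      unfolding n_trials_eq using Z_pos[of y] Z_fin[of y] by (intro cancelZ) auto
    also have "\<dots> = c * ennreal (exp (- (norm (closest_point K y - y))\<^sup>2 / (2 * \<eta>))) * (ennreal (1 / GG) * ennreal GG)"
      by (simp add: mult_ac)
    also have "ennreal (1 / GG) * ennreal GG = 1"
    proof -
      have "ennreal (1 / GG) * ennreal GG = ennreal (1 / GG * GG)"
        by (rule ennreal_mult[symmetric]) (use GG_pos in auto)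
      also have "\<dots> = 1" using GG_pos by simp
      finally show ?thesis .
    qed
    finally show "D' y * n_trials \<eta> K y \<le> c * ennreal (exp (- (norm (closest_point K y - y))\<^sup>2 / (2 * \<eta>)))"
      by simp
  qed
  also have "\<dots> = c * (\<integral>\<^sup>+y. ennreal (exp (- (norm (closest_point K y - y))\<^sup>2 / (2 * \<eta>))) \<partial>lborel)"
    by (rule nn_integral_cmult) measurable
  finally show ?thesis .
qed

end

lemma init_density:
  fixes K :: "'a::euclidean_space set" and \<mu>0 :: "'a measure"
  assumes Kc: "closed K" and V0: "emeasure lborel K \<noteq> 0" and Vi: "emeasure lborel K \<noteq> \<infinity>"
    and S: "sets \<mu>0 = sets borel" and W: "warm M \<mu>0 (uniform_measure lborel K)"
  shows "\<exists>D. D \<in> borel_measurable borel \<and> \<mu>0 = density lborel D \<and>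
           (\<forall>x. D x \<le> (ennreal M / emeasure lborel K) * indicator K x)"
proof -
  let ?\<pi> = "uniform_measure lborel K"
  let ?V = "emeasure lborel K"
  have [measurable]: "K \<in> sets borel" using Kc by simp
  interpret \<pi>: prob_space ?\<pi> using prob_space_uniform_measure[OF V0 Vi] .
  have ac: "absolutely_continuous ?\<pi> \<mu>0" and ae: "AE x in ?\<pi>. RN_deriv ?\<pi> \<mu>0 x \<le> ennreal M"
    using W unfolding warm_def by auto
  have sets: "sets \<mu>0 = sets ?\<pi>" using S by simp
  have rm: "RN_deriv ?\<pi> \<mu>0 \<in> borel_measurable borel"
    using borel_measurable_RN_deriv[of ?\<pi> \<mu>0] by (simp cong: measurable_cong_sets)
  define D where "D = (\<lambda>x. indicator K x / ?V * min (RN_deriv ?\<pi> \<mu>0 x) (ennreal M))"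
  have [measurable]: "D \<in> borel_measurable borel" unfolding D_def using rm by measurable
  have "\<mu>0 = density ?\<pi> (RN_deriv ?\<pi> \<mu>0)"
    using \<pi>.density_RN_deriv[OF ac sets] by simp
  also have "\<dots> = density ?\<pi> (\<lambda>x. min (RN_deriv ?\<pi> \<mu>0 x) (ennreal M))"
  proof (rule density_cong)
    show "RN_deriv ?\<pi> \<mu>0 \<in> borel_measurable ?\<pi>" by simp
    show "(\<lambda>x. min (RN_deriv ?\<pi> \<mu>0 x) (ennreal M)) \<in> borel_measurable ?\<pi>"
      using rm by (simp cong: measurable_cong_sets)
    show "AE x in ?\<pi>. RN_deriv ?\<pi> \<mu>0 x = min (RN_deriv ?\<pi> \<mu>0 x) (ennreal M)"
      using ae by eventually_elim simp
  qed
  also have "\<dots> = density lborel D"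
    unfolding uniform_measure_def D_def
    by (subst density_density_eq) (use rm in auto)
  finally have eq: "\<mu>0 = density lborel D" .
  have "D x \<le> (ennreal M / ?V) * indicator K x" for x
  proof (cases "x \<in> K")
    case True
    have "D x = min (RN_deriv ?\<pi> \<mu>0 x) (ennreal M) * inverse ?V"
      unfolding D_def using True by (simp add: divide_ennreal_def mult_ac)
    also have "\<dots> \<le> ennreal M * inverse ?V"
      by (intro mult_right_mono) auto
    finally show ?thesis using True by (simp add: divide_ennreal_def)
  qed (simp add: D_def)
  with eq show ?thesis using \<open>D \<in> borel_measurable borel\<close> by blast
qed

theorem mainTheorem7:
  fixes K :: "'a::euclidean_space set" and R M :: real and \<mu>0 :: "'a measure" and k :: nat
  assumes "K \<noteq> {}" and "closed K" and "convex K"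
    and "R > 1" and "ball 0 1 \<subseteq> K" and "K \<subseteq> cball 0 R"
    and "prob_space \<mu>0" and "sets \<mu>0 = sets borel"
    and "warm M \<mu>0 (uniform_measure lborel K)"
  shows "(\<integral>\<^sup>+ y. n_trials (1 / (real DIM('a))^2) K y
            \<partial>(asf_y_law (1 / (real DIM('a))^2) K \<mu>0 k))
         \<le> ennreal (M * (sqrt (2 * pi * exp 1) + 1))"
proof -
  note Kne = assms(1) and Kc = assms(2) and Kconv = assms(3) and Kb = assms(5) and KR = assms(6)
  define \<eta> where "\<eta> = 1 / (real DIM('a))^2"
  have eta: "\<eta> > 0" unfolding \<eta>_def by simp
  note ctx = eta Kc Kb KR
  let ?V = "emeasure lborel K"
  define c where "c = ennreal M / ?V"
  have Vp: "?V > 0" by (rule V_pos[OF ctx])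
  have Vf: "?V < \<infinity>" by (rule V_fin[OF ctx])
  have inv: "\<exists>D. D \<in> borel_measurable borel \<and> asf_x_law \<eta> K \<mu>0 n = density lborel D \<and> (\<forall>x. D x \<le> c * indicator K x)" for n
  proof (induction n)
    case 0
    show ?case unfolding c_def asf_x_law_def
      using init_density[OF Kc _ _ assms(8) assms(9)] Vp Vf by simp
  next
    case (Suc n)
    then obtain D where Dm: "D \<in> borel_measurable borel" and De: "asf_x_law \<eta> K \<mu>0 n = density lborel D"
      and Db: "\<And>x. D x \<le> c * indicator K x" by blast
    define D' where "D' = (\<lambda>y. \<integral>\<^sup>+x. D x * ennreal (gauss_dens \<eta> (y - x)) \<partial>lborel)"
    have D'm: "D' \<in> borel_measurable borel" unfolding D'_def by (rule fwd_meas[OF ctx Dm])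
    have D'b: "D' y \<le> c * ennreal (1 / GG TYPE('a) \<eta>) * asf_Z \<eta> K y" for y
      unfolding D'_def by (rule fwd_bound[OF ctx Dm Db])
    have "asf_x_law \<eta> K \<mu>0 (Suc n) = asf_backward \<eta> K (asf_forward \<eta> (asf_x_law \<eta> K \<mu>0 n))"
      by (simp add: asf_x_law_def)
    also have "\<dots> = asf_backward \<eta> K (density lborel D')"
      unfolding De D'_def by (simp add: fwd_eq[OF ctx Dm])
    also have "\<dots> = density lborel (\<lambda>x. \<integral>\<^sup>+y. D' y * (ennreal (exp (- (norm (x - y))\<^sup>2 / (2 * \<eta>)) * indicator K x) / asf_Z \<eta> K y) \<partial>lborel)"
      by (rule bwd_eq[OF ctx D'm])
    finally show ?case
      using bwd_meas[OF ctx D'm] bwd_bound[OF ctx D'b] by blast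
  qed
  obtain D where Dm: "D \<in> borel_measurable borel" and De: "asf_x_law \<eta> K \<mu>0 k = density lborel D"
    and Db: "\<And>x. D x \<le> c * indicator K x" using inv by blast
  define D' where "D' = (\<lambda>y. \<integral>\<^sup>+x. D x * ennreal (gauss_dens \<eta> (y - x)) \<partial>lborel)"
  have D'm: "D' \<in> borel_measurable borel" unfolding D'_def by (rule fwd_meas[OF ctx Dm])
  have D'b: "D' y \<le> c * ennreal (1 / GG TYPE('a) \<eta>) * asf_Z \<eta> K y" for y
    unfolding D'_def by (rule fwd_bound[OF ctx Dm Db])
  have ylaw: "asf_y_law \<eta> K \<mu>0 k = density lborel D'"
    unfolding asf_y_law_def De D'_def by (rule fwd_eq[OF ctx Dm])
  have "(\<integral>\<^sup>+ y. n_trials \<eta> K y \<partial>(asf_y_law \<eta> K \<mu>0 k))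
      \<le> c * (\<integral>\<^sup>+y. ennreal (exp (- (norm (closest_point K y - y))\<^sup>2 / (2 * \<eta>))) \<partial>lborel)"
    unfolding ylaw by (rule final_bound[OF ctx Kconv Kne D'm D'b])
  also have "(\<lambda>y. ennreal (exp (- (norm (closest_point K y - y))\<^sup>2 / (2 * \<eta>))))
      = (\<lambda>y. ennreal (exp (- (real DIM('a) * norm (closest_point K y - y))\<^sup>2 / 2)))"
    unfolding \<eta>_def by (simp add: power_mult_distrib field_simps)
  also have "c * (\<integral>\<^sup>+y. ennreal (exp (- (real DIM('a) * norm (closest_point K y - y))\<^sup>2 / 2)) \<partial>lborel)
      \<le> c * (?V * ennreal (1 + sqrt (2 * pi * exp 1)))"
    by (intro mult_left_mono Vmain Kc Kconv Kne Kb) simp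
  also have "c * (?V * ennreal (1 + sqrt (2 * pi * exp 1))) = ennreal M * ennreal (1 + sqrt (2 * pi * exp 1))"
  proof -
    have "c * ?V = ennreal M" unfolding c_def
      using Vp Vf by (simp add: ennreal_divide_times)
    then show ?thesis by (simp add: mult.assoc[symmetric])
  qed
  also have "\<dots> \<le> ennreal (M * (sqrt (2 * pi * exp 1) + 1))"
  proof (cases "M \<ge> 0")
    case True then show ?thesis by (simp add: ennreal_mult add.commute)
  next
    case False then show ?thesis by (simp add: ennreal_neg)
  qed
  finally show ?thesis unfolding \<eta>_def .
qed

end
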